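(* Let $m,n\ge1$, let $E$ be a linear subspace of $\mathbb{C}^{n\times m}$, let $\lambda_0\in\mathbb{D}\setminus\{0\}$ and let $W\in\mathbb{C}^{m\times n}$. There exists a holomorphic $F:\mathbb{D}\to\mathbb{C}^{m\times n}$ with every entry in the Nevanlinna class such that $F(0)=0$, $F(\lambda_0)=W$ and $\mu_E(F(\lambda))<1$ for all $\lambda\in\mathbb{D}$, if and only if $\mu_E(W)\le|\lambda_0|$.
   Context: $\mathbb{D}$ is the open unit disc. For $A\in\mathbb{C}^{m\times n}$, $\mu_E(A)$ is defined by $1/\mu_E(A)=\inf\{\|X\|:X\in E,\ \det(I-AX)=0\}$ (operator norm; $\mu_E(A)=0$ if no such $X$ exists). The Nevanlinna class $N$ consists of holomorphic functions $f$ on $\mathbb{D}$ with $\sup_{0<r<1}\int_0^{2\pi}\log^+|f(re^{i\theta})|\,d\theta<\infty$. *)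

theory Defs
  imports "HOL-Analysis.Analysis"
begin

definition cmat_subspace :: "(complex^'c^'r) set \<Rightarrow> bool" where
  "cmat_subspace E \<longleftrightarrow> 0 \<in> E \<and> (\<forall>X\<in>E. \<forall>Y\<in>E. X + Y \<in> E) \<and>
     (\<forall>c X. X \<in> E \<longrightarrow> (\<chi> i j. c * X $ i $ j) \<in> E)"

definition opnorm :: "complex^'c^'r \<Rightarrow> real" where
  "opnorm X = onorm (\<lambda>v. X *v v)"

definition mu :: "(complex^'m^'n) set \<Rightarrow> complex^'n^'m \<Rightarrow> real" where
  "mu E A = (if {X \<in> E. det (mat 1 - A ** X) = 0} = {} then 0
             else 1 / Inf (opnorm ` {X \<in> E. det (mat 1 - A ** X) = 0}))"

definition logplus :: "real \<Rightarrow> real" where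
  "logplus x = (if x \<le> 1 then 0 else ln x)"

definition nevanlinna :: "(complex \<Rightarrow> complex) \<Rightarrow> bool" where
  "nevanlinna f \<longleftrightarrow> f holomorphic_on ball 0 1 \<and>
     bdd_above ((\<lambda>r. integral {0..2*pi} (\<lambda>t. logplus (cmod (f (complex_of_real r * cis t))))) ` {0<..<1})"

end

theory Submission
  imports Defs "HOL-Complex_Analysis.Complex_Analysis"
begin

definition smat :: "complex \<Rightarrow> complex^'c^'r \<Rightarrow> complex^'c^'r" where
  "smat c A = (\<chi> i j. c * A $ i $ j)"

lemma norm_cvec_scale: "norm (\<chi> i. c * (y::complex^'n) $ i) = cmod c * norm y"
  unfolding norm_vec_def by (simp add: L2_set_right_distrib norm_mult)

lemma smat_mult_vec: "smat c X *v v = (\<chi> i. c * (X *v v) $ i)"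
  by (simp add: smat_def matrix_vector_mult_def vec_eq_iff sum_distrib_left mult.assoc)

lemma opnorm_smat: "opnorm (smat c X) \<le> cmod c * opnorm X"
  unfolding opnorm_def
proof (rule onorm_le)
  fix v
  have "norm (smat c X *v v) = cmod c * norm (X *v v)"
    by (simp add: smat_mult_vec norm_cvec_scale)
  also have "\<dots> \<le> cmod c * (onorm ((*v) X) * norm v)"
    by (intro mult_left_mono onorm) auto
  finally show "norm (smat c X *v v) \<le> cmod c * onorm ((*v) X) * norm v" by (simp add: mult.assoc)
qed

lemma opnorm_nonneg: "0 \<le> opnorm X"
  unfolding opnorm_def by (intro onorm_pos_le) auto

lemma sing_bound:
  fixes A :: "complex^'n^'m" and X :: "complex^'m^'n"
  assumes "det (mat 1 - A ** X) = 0"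
  shows "1 \<le> opnorm A * opnorm X"
proof -
  have "\<not> invertible (mat 1 - A ** X)" using assms invertible_det_nz by blast
  then have "\<not> (\<forall>x. (mat 1 - A ** X) *v x = 0 \<longrightarrow> x = 0)"
    using invertible_left_inverse matrix_left_invertible_ker by metis
  then obtain v where v: "(mat 1 - A ** X) *v v = 0" "v \<noteq> 0" by blast
  then have vv: "v = A *v (X *v v)"
    by (simp add: matrix_vector_mult_diff_rdistrib matrix_vector_mul_assoc)
  have "norm v \<le> opnorm A * norm (X *v v)"
    unfolding opnorm_def by (subst vv) (intro onorm, auto)
  also have "\<dots> \<le> opnorm A * (opnorm X * norm v)"
    unfolding opnorm_def by (intro mult_left_mono onorm onorm_pos_le) auto
  finally have "1 * norm v \<le> (opnorm A * opnorm X) * norm v" by (simp add: mult.assoc)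
  then show ?thesis using v(2) by (simp add: mult_le_cancel_right)
qed


lemma sing_lower:
  fixes A :: "complex^'n^'m" and X :: "complex^'m^'n"
  assumes "det (mat 1 - A ** X) = 0"
  shows "opnorm A > 0" "1 / opnorm A \<le> opnorm X"
proof -
  have 1: "1 \<le> opnorm A * opnorm X" by (rule sing_bound[OF assms])
  have "opnorm A \<noteq> 0" using 1 by auto
  then show A: "opnorm A > 0" using opnorm_nonneg[of A] by auto
  show "1 / opnorm A \<le> opnorm X" using 1 A by (simp add: divide_le_eq mult.commute)
qed

lemma Inf_pos:
  fixes A :: "complex^'n^'m" and E :: "(complex^'m^'n) set"
  assumes "{X \<in> E. det (mat 1 - A ** X) = 0} \<noteq> {}"
  shows "Inf (opnorm ` {X \<in> E. det (mat 1 - A ** X) = 0}) > 0"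
proof -
  obtain X0 where X0: "X0 \<in> E" "det (mat 1 - A ** X0) = 0" using assms by blast
  have A: "opnorm A > 0" using sing_lower(1)[OF X0(2)] .
  have "1 / opnorm A \<le> Inf (opnorm ` {X \<in> E. det (mat 1 - A ** X) = 0})"
    using assms by (intro cInf_greatest) (auto intro: sing_lower(2))
  then show ?thesis using A by (smt (verit) divide_pos_pos)
qed

lemma mu_nonneg: "0 \<le> mu E A"
proof -
  have "0 \<le> Inf (opnorm ` {X \<in> E. det (mat 1 - A ** X) = 0})"
    if "{X \<in> E. det (mat 1 - A ** X) = 0} \<noteq> {}"
    using that by (intro cInf_greatest) (auto simp: opnorm_nonneg)
  then show ?thesis unfolding mu_def by auto
qed

lemma mu_lt1:
  fixes A :: "complex^'n^'m" and E :: "(complex^'m^'n) set"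
  assumes "mu E A < 1" "X \<in> E" "opnorm X \<le> 1"
  shows "det (mat 1 - A ** X) \<noteq> 0"
proof
  assume d: "det (mat 1 - A ** X) = 0"
  let ?S = "{X \<in> E. det (mat 1 - A ** X) = 0}"
  have ne: "?S \<noteq> {}" using d assms by blast
  have p: "Inf (opnorm ` ?S) > 0" by (rule Inf_pos[OF ne])
  have "Inf (opnorm ` ?S) \<le> opnorm X"
    using d assms by (intro cInf_lower) (auto intro!: bdd_belowI[where m=0] simp: opnorm_nonneg)
  then have "Inf (opnorm ` ?S) \<le> 1" using assms by simp
  then have "1 \<le> mu E A" unfolding mu_def using ne p by (simp add: le_divide_eq)
  then show False using assms by simp
qed

lemma mu_gt:
  fixes A :: "complex^'n^'m" and E :: "(complex^'m^'n) set"
  assumes "mu E A > a" "a > 0"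
  obtains Y where "Y \<in> E" "det (mat 1 - A ** Y) = 0" "opnorm Y < 1 / a"
proof -
  let ?S = "{X \<in> E. det (mat 1 - A ** X) = 0}"
  have ne: "?S \<noteq> {}" using assms unfolding mu_def by (auto split: if_splits)
  have p: "Inf (opnorm ` ?S) > 0" by (rule Inf_pos[OF ne])
  have "mu E A = 1 / Inf (opnorm ` ?S)" unfolding mu_def using ne by (simp only: if_False)
  then have "a < 1 / Inf (opnorm ` ?S)" using assms by simp
  then have "Inf (opnorm ` ?S) < 1 / a" using p assms(2)
    by (simp add: field_simps)
  then obtain y where "y \<in> opnorm ` ?S" "y < 1 / a"
    using ne by (meson cInf_lessD image_is_empty)
  then show ?thesis using that by auto
qed

lemma inv_le: "\<And>a b::real. 0 < a \<Longrightarrow> a \<le> b \<Longrightarrow> 1 / b \<le> 1 / a"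
  by (simp add: frac_le)

lemma smat_mult: "smat c W ** X = W ** smat c X"
  by (simp add: smat_def matrix_matrix_mult_def vec_eq_iff sum_distrib_left algebra_simps)

lemma smat_in: "cmat_subspace E \<Longrightarrow> X \<in> E \<Longrightarrow> smat c X \<in> E"
  unfolding cmat_subspace_def smat_def by blast

lemma mu_scale:
  fixes W :: "complex^'n^'m" and E :: "(complex^'m^'n) set"
  assumes "cmat_subspace E"
  shows "mu E (smat c W) \<le> cmod c * mu E W"
proof (cases "c = 0")
  case True
  have "smat c W = 0" using True by (simp add: smat_def vec_eq_iff)
  then have "mu E (smat c W) = 0" unfolding mu_def by simp
  then show ?thesis using mu_nonneg[of E W] by simp
next
  case False
  let ?S = "{X \<in> E. det (mat 1 - W ** X) = 0}"
  let ?S' = "{X \<in> E. det (mat 1 - smat c W ** X) = 0}"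
  show ?thesis
  proof (cases "?S' = {}")
    case True
    then have "mu E (smat c W) = 0" unfolding mu_def by (simp only: if_True simp_thms)
    then show ?thesis using mu_nonneg[of E W] by simp
  next
    case ne': False
    then obtain X0 where "X0 \<in> ?S'" by blast
    then have "smat c X0 \<in> ?S" using smat_in[OF assms] by (auto simp: smat_mult)
    then have ne: "?S \<noteq> {}" by blast
    have p: "Inf (opnorm ` ?S) > 0" by (rule Inf_pos[OF ne])
    have "Inf (opnorm ` ?S) / cmod c \<le> Inf (opnorm ` ?S')"
    proof (rule cInf_greatest)
      show "opnorm ` ?S' \<noteq> {}" using ne' by blast
      fix y assume "y \<in> opnorm ` ?S'"
      then obtain X where X: "X \<in> ?S'" "y = opnorm X" by blast
      then have "smat c X \<in> ?S" using smat_in[OF assms] by (auto simp: smat_mult)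
      then have "Inf (opnorm ` ?S) \<le> opnorm (smat c X)"
        by (intro cInf_lower) (auto intro!: bdd_belowI[where m=0] simp: opnorm_nonneg)
      also have "\<dots> \<le> cmod c * opnorm X" by (rule opnorm_smat)
      finally show "Inf (opnorm ` ?S) / cmod c \<le> y" using X False
        by (simp add: divide_le_eq mult.commute)
    qed
    moreover have "0 < Inf (opnorm ` ?S) / cmod c" using p False by simp
    ultimately have "1 / Inf (opnorm ` ?S') \<le> 1 / (Inf (opnorm ` ?S) / cmod c)"
      using inv_le by blast
    moreover have "mu E (smat c W) = 1 / Inf (opnorm ` ?S')" unfolding mu_def using ne' by (simp only: if_False)
    moreover have "mu E W = 1 / Inf (opnorm ` ?S)" unfolding mu_def using ne by (simp only: if_False)
    ultimately show ?thesis by simp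
  qed
qed


lemma continuous_on_det:
  fixes M :: "'a::topological_space \<Rightarrow> complex^'n^'n"
  assumes "\<And>i j. continuous_on S (\<lambda>x. M x $ i $ j)"
  shows "continuous_on S (\<lambda>x. det (M x))"
  unfolding det_def by (intro continuous_intros assms)

lemma holomorphic_on_det:
  fixes M :: "complex \<Rightarrow> complex^'n^'n"
  assumes "\<And>i j. (\<lambda>x. M x $ i $ j) holomorphic_on S"
  shows "(\<lambda>x. det (M x)) holomorphic_on S"
  unfolding det_def by (intro holomorphic_intros assms)

lemma logplus_mono: "x \<le> y \<Longrightarrow> logplus x \<le> logplus y"
  unfolding logplus_def by auto

lemma nevanlinna_linear: "nevanlinna (\<lambda>z. a * z)"
  unfolding nevanlinna_def
proof
  show "(\<lambda>z. a * z) holomorphic_on ball 0 1" by (intro holomorphic_intros)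
  show "bdd_above ((\<lambda>r. integral {0..2*pi} (\<lambda>t. logplus (cmod (a * (complex_of_real r * cis t))))) ` {0<..<1})"
  proof (rule bdd_aboveI2)
    fix r :: real assume r: "r \<in> {0<..<1}"
    have "integral {0..2*pi} (\<lambda>t. logplus (cmod (a * (complex_of_real r * cis t))))
        = integral {0..2*pi} (\<lambda>t. logplus (cmod a * r))"
      using r by (simp add: norm_mult)
    also have "\<dots> = 2*pi * logplus (cmod a * r)" by simp
    also have "\<dots> \<le> 2*pi * logplus (cmod a)"
      using r by (intro mult_left_mono logplus_mono) (auto simp: mult_left_le)
    finally show "integral {0..2*pi} (\<lambda>t. logplus (cmod (a * (complex_of_real r * cis t)))) \<le> 2*pi * logplus (cmod a)" .
  qed
qed

lemma backward:
  fixes E :: "(complex^'m::finite^'n::finite) set"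
    and W :: "complex^'n^'m"
    and l0 :: complex
  assumes "cmat_subspace E"
    and "l0 \<in> ball 0 1" and "l0 \<noteq> 0"
    and "mu E W \<le> cmod l0"
  shows "\<exists>F :: complex \<Rightarrow> complex^'n^'m.
            (\<forall>i j. nevanlinna (\<lambda>z. F z $ i $ j)) \<and>
            F 0 = 0 \<and> F l0 = W \<and> (\<forall>z\<in>ball 0 1. mu E (F z) < 1)"
proof (intro exI conjI allI ballI)
  let ?F = "\<lambda>z. smat (z / l0) W"
  fix i j
  have "(\<lambda>z. ?F z $ i $ j) = (\<lambda>z. (W $ i $ j / l0) * z)"
    by (auto simp: smat_def)
  then show "nevanlinna (\<lambda>z. ?F z $ i $ j)" using nevanlinna_linear by metis
next
  show "smat (0 / l0) W = 0" by (simp add: smat_def vec_eq_iff)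
  show "smat (l0 / l0) W = W" using assms by (simp add: smat_def vec_eq_iff)
next
  fix z :: complex assume z: "z \<in> ball 0 1"
  have "mu E (smat (z / l0) W) \<le> cmod (z / l0) * mu E W" by (rule mu_scale[OF assms(1)])
  also have "\<dots> \<le> cmod (z / l0) * cmod l0" using assms by (intro mult_left_mono) auto
  also have "\<dots> = cmod z" using assms by (simp add: norm_divide)
  also have "\<dots> < 1" using z by simp
  finally show "mu E (smat (z / l0) W) < 1" .
qed


lemma homotopy_zero_free:
  fixes q :: "real \<Rightarrow> complex \<Rightarrow> complex" and r :: real
  assumes r: "r > 0"
    and cont: "continuous_on ({0..1} \<times> cball 0 r) (\<lambda>p. q (fst p) (snd p))"
    and hol: "\<And>t. t \<in> {0..1} \<Longrightarrow> q t holomorphic_on ball 0 r"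
    and bd: "\<And>t z. t \<in> {0..1} \<Longrightarrow> cmod z = r \<Longrightarrow> q t z \<noteq> 0"
    and q0: "\<And>z. z \<in> ball 0 r \<Longrightarrow> q 0 z \<noteq> 0"
    and t1: "t1 \<in> {0..1}" and z1: "z1 \<in> ball 0 r"
  shows "q t1 z1 \<noteq> 0"
proof (rule ccontr)
  assume "\<not> q t1 z1 \<noteq> 0"
  then have qz: "q t1 z1 = 0" by simp
  let ?Q = "\<lambda>p. q (fst p) (snd p)"
  have "compact ({0..1::real} \<times> cball (0::complex) r)"
    by (intro compact_Times compact_Icc compact_cball)
  then have ucQ: "uniformly_continuous_on ({0..1} \<times> cball 0 r) ?Q"
    using cont compact_uniformly_continuous by blast
  have uc: "\<exists>d>0. \<forall>t\<in>{0..1}. \<forall>t'\<in>{0..1}. \<forall>z\<in>cball 0 r. \<bar>t - t'\<bar> < d \<longrightarrow> cmod (q t z - q t' z) < e"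
    if e: "e > 0" for e
  proof -
    obtain d where d: "d > 0" "\<forall>x\<in>{0..1} \<times> cball 0 r. \<forall>x'\<in>{0..1} \<times> cball 0 r. dist x' x < d \<longrightarrow> dist (?Q x') (?Q x) < e"
      using ucQ e unfolding uniformly_continuous_on_def by metis
    show ?thesis
    proof (intro exI conjI ballI impI)
      fix t t' z assume tz: "t \<in> {0..1}" "t' \<in> {0..1}" "z \<in> cball (0::complex) r" "\<bar>t - t'\<bar> < d"
      have "dist (t, z) (t', z) < d" using tz by (simp add: dist_Pair_Pair dist_real_def)
      then have "dist (?Q (t,z)) (?Q (t',z)) < e" using d tz by blast
      then show "cmod (q t z - q t' z) < e" by (simp add: dist_norm)
    qed (rule d)
  qed
  have contt: "continuous_on (cball 0 r) (q t)" if t: "t \<in> {0..1}" for t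
  proof -
    have "continuous_on (cball 0 r) (\<lambda>z. ?Q (t, z))"
      by (rule continuous_on_compose2[OF cont]) (use t in \<open>auto intro!: continuous_intros\<close>)
    then show ?thesis by simp
  qed
  define B where "B = {t\<in>{0..1}. \<exists>z\<in>ball 0 r. q t z = 0}"
  have t1B: "t1 \<in> B" using t1 z1 qz unfolding B_def by blast
  have bddB: "bdd_below B" unfolding B_def by (rule bdd_belowI[where m=0]) auto
  define \<tau> where "\<tau> = Inf B"
  have tau0: "0 \<le> \<tau>" unfolding \<tau>_def using t1B by (intro cInf_greatest) (auto simp: B_def)
  have taub: "\<tau> \<le> b" if "b \<in> B" for b unfolding \<tau>_def using that bddB by (rule cInf_lower)
  have tau1: "\<tau> \<le> 1" using taub[OF t1B] t1 by simp
  have below: "q t z \<noteq> 0" if "0 \<le> t" "t < \<tau>" "z \<in> ball 0 r" for t z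
  proof
    assume "q t z = 0"
    then have "t \<in> B" using that tau1 unfolding B_def by auto
    then show False using taub that by fastforce
  qed
  have A: "q \<tau> z \<noteq> 0" if z: "z \<in> ball 0 r" for z
  proof (cases "\<tau> = 0")
    case True then show ?thesis using q0 z by simp
  next
    case False
    then have tpos: "\<tau> > 0" using tau0 by simp
    show ?thesis
    proof (cases "q \<tau> constant_on ball 0 r")
      case True
      then obtain c where c: "\<And>w. w \<in> ball 0 r \<Longrightarrow> q \<tau> w = c" unfolding constant_on_def by blast
      have "q \<tau> (of_real r) = c"
        using continuous_constant_on_closure[of "ball 0 r" "q \<tau>" c "of_real r"] contt[of \<tau>] tau0 tau1 c r
        by (auto simp: closure_ball)
      moreover have "q \<tau> (of_real r) \<noteq> 0" using bd[of \<tau> "of_real r"] tau0 tau1 r by auto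
      ultimately show ?thesis using c z by simp
    next
      case nonconst: False
      define tk where "tk = (\<lambda>k::nat. \<tau> - \<tau> / (real k + 2))"
      have tk: "0 \<le> tk k" "tk k < \<tau>" for k
        using tpos unfolding tk_def by (auto simp: field_simps)
      show ?thesis
      proof (rule Hurwitz_no_zeros[of "ball 0 r" "\<lambda>k. q (tk k)" "q \<tau>" z])
        show "open (ball (0::complex) r)" "connected (ball (0::complex) r)" by auto
        show "q (tk k) holomorphic_on ball 0 r" for k using hol tk[of k] tau1 by auto
        show "q \<tau> holomorphic_on ball 0 r" using hol tau0 tau1 by auto
        show "\<not> q \<tau> constant_on ball 0 r" by (rule nonconst)
        show "q (tk k) w \<noteq> 0" if "w \<in> ball 0 r" for k w using below tk that by blast
        show "z \<in> ball 0 r" by (rule z)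
        fix K :: "complex set" assume K: "compact K" "K \<subseteq> ball 0 r"
        show "uniform_limit K (\<lambda>k. q (tk k)) (q \<tau>) sequentially"
        proof (rule uniform_limitI)
          fix e :: real assume e: "e > 0"
          obtain d where d: "d > 0" "\<forall>t\<in>{0..1}. \<forall>t'\<in>{0..1}. \<forall>z\<in>cball 0 r. \<bar>t - t'\<bar> < d \<longrightarrow> cmod (q t z - q t' z) < e"
            using uc[OF e] by blast
          obtain N :: nat where N: "\<tau> / d < real N" using reals_Archimedean2 by blast
          show "\<forall>\<^sub>F k in sequentially. \<forall>w\<in>K. dist (q (tk k) w) (q \<tau> w) < e"
            unfolding eventually_sequentially
          proof (intro exI allI impI ballI)
            fix k w assume k: "N \<le> k" and w: "w \<in> K"
            have "\<tau> / d < real k + 2" using N k by linarith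
            then have "\<tau> < d * (real k + 2)" using d(1) by (simp add: divide_less_eq mult.commute)
            then have "\<tau> / (real k + 2) < d" by (simp add: divide_less_eq)
            then have "\<bar>tk k - \<tau>\<bar> < d" unfolding tk_def using tpos by simp
            moreover have "tk k \<in> {0..1}" using tk[of k] tau1 by auto
            moreover have "w \<in> cball 0 r" using w K by auto
            ultimately show "dist (q (tk k) w) (q \<tau> w) < e"
              using d(2) tau0 tau1 by (auto simp: dist_norm)
          qed
        qed
      qed
    qed
  qed
  have nzc: "q \<tau> z \<noteq> 0" if "z \<in> cball 0 r" for z
  proof (cases "cmod z = r")
    case True then show ?thesis using bd tau0 tau1 by auto
  next
    case False then show ?thesis using A that by (auto simp: dist_norm)
  qed
  obtain z0 where z0: "z0 \<in> cball 0 r" "\<And>y. y \<in> cball 0 r \<Longrightarrow> cmod (q \<tau> z0) \<le> cmod (q \<tau> y)"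
  proof -
    have "continuous_on (cball 0 r) (\<lambda>z. cmod (q \<tau> z))"
      using contt[of \<tau>] tau0 tau1 by (auto intro: continuous_intros)
    then show ?thesis
      using continuous_attains_inf[of "cball (0::complex) r" "\<lambda>z. cmod (q \<tau> z)"] that r by auto
  qed
  define \<delta> where "\<delta> = cmod (q \<tau> z0)"
  have dpos: "\<delta> > 0" using nzc[OF z0(1)] unfolding \<delta>_def by simp
  obtain d where d: "d > 0" "\<forall>t\<in>{0..1}. \<forall>t'\<in>{0..1}. \<forall>z\<in>cball 0 r. \<bar>t - t'\<bar> < d \<longrightarrow> cmod (q t z - q t' z) < \<delta>"
    using uc[OF dpos] by blast
  have "Inf B < \<tau> + d" using d(1) unfolding \<tau>_def by simp
  then obtain b where b: "b \<in> B" "b < \<tau> + d" using t1B cInf_lessD[of B "\<tau> + d"] by blast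
  then obtain z where z: "z \<in> ball 0 r" "q b z = 0" and b01: "b \<in> {0..1}" unfolding B_def by blast
  have "\<bar>b - \<tau>\<bar> < d" using b taub[OF b(1)] by simp
  then have "cmod (q b z - q \<tau> z) < \<delta>" using d(2) b01 tau0 tau1 z(1) by auto
  then have "cmod (q \<tau> z) < \<delta>" using z(2) by simp
  moreover have "\<delta> \<le> cmod (q \<tau> z)" unfolding \<delta>_def using z0(2) z(1) by auto
  ultimately show False by simp
qed


lemma smat_smat: "smat a (smat b X) = smat (a * b) X"
  by (simp add: smat_def vec_eq_iff mult.assoc)

lemma smat_one: "smat 1 X = X"
  by (simp add: smat_def vec_eq_iff)

lemma smat_zero: "smat 0 X = 0"
  by (simp add: smat_def vec_eq_iff)

lemma forward:
  fixes E :: "(complex^'m::finite^'n::finite) set"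
    and W :: "complex^'n^'m"
    and l0 :: complex
    and F :: "complex \<Rightarrow> complex^'n^'m"
  assumes EE: "cmat_subspace E"
    and l0: "l0 \<in> ball 0 1" "l0 \<noteq> 0"
    and nev: "\<forall>i j. nevanlinna (\<lambda>z. F z $ i $ j)"
    and F0: "F 0 = 0" and Fl0: "F l0 = W" and muF: "\<forall>z\<in>ball 0 1. mu E (F z) < 1"
  shows "mu E W \<le> cmod l0"
proof (rule ccontr)
  assume "\<not> mu E W \<le> cmod l0"
  then have gt: "mu E W > cmod l0" by simp
  have l0pos: "cmod l0 > 0" using l0 by simp
  obtain Y where Y: "Y \<in> E" "det (mat 1 - W ** Y) = 0" "opnorm Y < 1 / cmod l0"
    using mu_gt[OF gt l0pos] by blast
  define X' where "X' = smat l0 Y"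
  have X'E: "X' \<in> E" unfolding X'_def by (rule smat_in[OF EE Y(1)])
  define s where "s = opnorm X'"
  have "s \<le> cmod l0 * opnorm Y" unfolding s_def X'_def by (rule opnorm_smat)
  also have "\<dots> < cmod l0 * (1 / cmod l0)" using Y(3) l0pos by (intro mult_strict_left_mono) auto
  also have "\<dots> = 1" using l0pos by simp
  finally have s1: "s < 1" .
  have s0: "0 \<le> s" unfolding s_def by (rule opnorm_nonneg)
  define r where "r = (max s (cmod l0) + 1) / 2"
  have r: "0 < r" "s < r" "cmod l0 < r" "r < 1" using s1 s0 l0pos l0(1) unfolding r_def by auto
  have holF: "(\<lambda>z. F z $ i $ j) holomorphic_on ball 0 1" for i j
    using nev unfolding nevanlinna_def by blast
  define G where "G = (\<lambda>z. (\<chi> i j. if z = 0 then deriv (\<lambda>w. F w $ i $ j) 0 else F z $ i $ j / z) :: complex^'n^'m)"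
  have holG: "(\<lambda>z. G z $ i $ j) holomorphic_on ball 0 1" for i j
  proof -
    have "(\<lambda>z. if z = 0 then deriv (\<lambda>w. F w $ i $ j) 0 else (F z $ i $ j - F 0 $ i $ j) / (z - 0)) holomorphic_on ball 0 1"
      by (rule pole_lemma[OF holF]) auto
    moreover have "(\<lambda>z. if z = 0 then deriv (\<lambda>w. F w $ i $ j) 0 else (F z $ i $ j - F 0 $ i $ j) / (z - 0)) = (\<lambda>z. G z $ i $ j)"
      using F0 by (auto simp: G_def)
    ultimately show ?thesis by simp
  qed
  have FG: "F z = smat z (G z)" for z
    using F0 by (cases "z = 0") (auto simp: smat_def G_def vec_eq_iff)
  define q where "q = (\<lambda>(t::real) z. det (mat 1 - G z ** smat (complex_of_real t) X'))"
  have ent: "(mat 1 - G z ** smat (complex_of_real t) X') $ i $ j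
        = (if i = j then 1 else 0) - (\<Sum>k\<in>UNIV. G z $ i $ k * (complex_of_real t * X' $ k $ j))" for z t i j
    by (simp add: matrix_matrix_mult_def smat_def mat_def)
  have sub: "cball 0 r \<subseteq> ball (0::complex) 1" using r by auto
  have contG: "continuous_on ({0..1} \<times> cball 0 r) (\<lambda>p. G (snd p) $ i $ k)" for i k
  proof (rule continuous_on_compose2[of "cball 0 r" "\<lambda>z. G z $ i $ k"])
    show "continuous_on (cball 0 r) (\<lambda>z. G z $ i $ k)"
      using holomorphic_on_imp_continuous_on[OF holG] sub continuous_on_subset by blast
  qed (auto intro: continuous_intros)
  have cont: "continuous_on ({0..1} \<times> cball 0 r) (\<lambda>p. q (fst p) (snd p))"
    unfolding q_def case_prod_unfold
    by (intro continuous_on_det, unfold ent) (intro continuous_intros contG)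
  have hol: "q t holomorphic_on ball 0 r" for t
  proof -
    have "(\<lambda>z. det (mat 1 - G z ** smat (complex_of_real t) X')) holomorphic_on ball 0 r"
      by (intro holomorphic_on_det, unfold ent)
         (intro holomorphic_intros holomorphic_on_subset[OF holG], use r in auto)
    then show ?thesis unfolding q_def by simp
  qed
  have bd: "q t z \<noteq> 0" if t: "t \<in> {0..1}" and z: "cmod z = r" for t z
  proof -
    have z0: "z \<noteq> 0" using z r by auto
    have eq: "G z ** smat (complex_of_real t) X' = F z ** smat (of_real t / z) X'"
      using z0 by (simp add: FG smat_mult smat_smat)
    have "opnorm (smat (of_real t / z) X') \<le> cmod (of_real t / z) * s"
      unfolding s_def by (rule opnorm_smat)
    also have "\<dots> = t / r * s" using t z by (simp add: norm_divide)
    also have "\<dots> = t * (s / r)" by simp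
    also have "\<dots> \<le> 1 * 1" using t r s0 s1 by (intro mult_mono) auto
    finally have on: "opnorm (smat (of_real t / z) X') \<le> 1" by simp
    have "det (mat 1 - F z ** smat (of_real t / z) X') \<noteq> 0"
      using mu_lt1[OF _ smat_in[OF EE X'E] on] muF z r by auto
    then show ?thesis unfolding q_def eq by simp
  qed
  have q0: "q 0 z \<noteq> 0" for z
    unfolding q_def by (simp add: smat_zero)
  have "q 1 l0 \<noteq> 0"
    by (rule homotopy_zero_free[OF r(1) cont hol bd q0]) (use r in auto)
  moreover have "q 1 l0 = 0"
  proof -
    have "G l0 ** smat (complex_of_real 1) X' = F l0 ** smat (1 / l0) X'"
      using l0 by (simp add: FG smat_mult smat_smat)
    also have "\<dots> = W ** Y" using l0 by (simp add: Fl0 X'_def smat_smat smat_one)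
    finally show ?thesis unfolding q_def using Y(2) by simp
  qed
  ultimately show False by simp
qed

theorem proposition10p3:
  fixes E :: "(complex^'m::finite^'n::finite) set"
    and W :: "complex^'n^'m"
    and l0 :: complex
  assumes "cmat_subspace E"
    and "l0 \<in> ball 0 1" and "l0 \<noteq> 0"
  shows "(\<exists>F :: complex \<Rightarrow> complex^'n^'m.
            (\<forall>i j. nevanlinna (\<lambda>z. F z $ i $ j)) \<and>
            F 0 = 0 \<and> F l0 = W \<and> (\<forall>z\<in>ball 0 1. mu E (F z) < 1))
         \<longleftrightarrow> mu E W \<le> cmod l0"
proof
  assume "\<exists>F :: complex \<Rightarrow> complex^'n^'m.
            (\<forall>i j. nevanlinna (\<lambda>z. F z $ i $ j)) \<and>
            F 0 = 0 \<and> F l0 = W \<and> (\<forall>z\<in>ball 0 1. mu E (F z) < 1)"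
  then obtain F :: "complex \<Rightarrow> complex^'n^'m" where
    "\<forall>i j. nevanlinna (\<lambda>z. F z $ i $ j)" "F 0 = 0" "F l0 = W" "\<forall>z\<in>ball 0 1. mu E (F z) < 1"
    by blast
  then show "mu E W \<le> cmod l0" using forward[OF assms] by blast
next
  assume "mu E W \<le> cmod l0"
  then show "\<exists>F :: complex \<Rightarrow> complex^'n^'m.
            (\<forall>i j. nevanlinna (\<lambda>z. F z $ i $ j)) \<and>
            F 0 = 0 \<and> F l0 = W \<and> (\<forall>z\<in>ball 0 1. mu E (F z) < 1)"
    using backward[OF assms] by blast
qed

end
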